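(* Let $(X,d)$ be a bounded metric space, $\lambda\ge0$, and $\ell:X\to[0,+\infty)$ lower semicontinuous with $\inf_X\ell=0$. Then the function $v(x):=\ell(x)\,\mathrm{diam}(X)$ is a supersolution of $(\mathcal{G}_\lambda)$. Moreover, $T_\lambda^\infty v$ is the Perron solution of $(\mathcal{G}_\lambda)$.
   Context: $\mathrm{diam}(X)=\sup\{d(x,y):x,y\in X\}$. Global slope: $G[u](x)=\sup_{y\neq x}\frac{(u(x)-u(y))_+}{d(x,y)}$ if $u(x)<+\infty$, $G[u](x)=+\infty$ otherwise. For $(\mathcal{G}_\lambda)$: a supersolution is a lower semicontinuous $v:X\to\mathbb{R}\cup\{+\infty\}$ with $\inf_Xv=0$ and $\lambda v+G[v]\ge\ell$ on $X$; a solution is a lower semicontinuous $u$ with $\inf_Xu=0$ and $\lambda u+G[u]=\ell$ on $X$; the Perron solution is a solution that is pointwise $\ge$ every solution. $T_\lambda u(x)=\inf_{y\in X}\frac{u(y)+\ell(x)d(x,y)}{1+\lambda d(x,y)}$ for $u:X\to[0,+\infty]$, and $T_\lambda^\infty u=\lim_nT_\lambda^nu$ pointwise. *)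

theory Defs
  imports "HOL-Analysis.Analysis"
begin

definition lsc :: "('a::topological_space \<Rightarrow> 'b::linorder) \<Rightarrow> bool" where
  "lsc f \<longleftrightarrow> (\<forall>c. open {x. c < f x})"

text \<open>Global slope; the supremum over the empty set (one-point space) is taken to be 0.\<close>
definition gslope :: "('a::metric_space \<Rightarrow> ereal) \<Rightarrow> 'a \<Rightarrow> ereal" where
  "gslope u x = (if u x < \<infinity>
     then Sup (insert 0 {max 0 (u x - u y) / ereal (dist x y) | y. y \<noteq> x})
     else \<infinity>)"

definition supersol :: "real \<Rightarrow> ('a::metric_space \<Rightarrow> real) \<Rightarrow> ('a \<Rightarrow> ereal) \<Rightarrow> bool" where
  "supersol lam l v \<longleftrightarrow> lsc v \<and> (INF x. v x) = 0 \<and>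
     (\<forall>x. ereal lam * v x + gslope v x \<ge> ereal (l x))"

definition sol :: "real \<Rightarrow> ('a::metric_space \<Rightarrow> real) \<Rightarrow> ('a \<Rightarrow> ereal) \<Rightarrow> bool" where
  "sol lam l u \<longleftrightarrow> lsc u \<and> (INF x. u x) = 0 \<and>
     (\<forall>x. ereal lam * u x + gslope u x = ereal (l x))"

definition perron_sol :: "real \<Rightarrow> ('a::metric_space \<Rightarrow> real) \<Rightarrow> ('a \<Rightarrow> ereal) \<Rightarrow> bool" where
  "perron_sol lam l u \<longleftrightarrow> sol lam l u \<and> (\<forall>w. sol lam l w \<longrightarrow> (\<forall>x. w x \<le> u x))"

definition Top :: "real \<Rightarrow> ('a::metric_space \<Rightarrow> real) \<Rightarrow> ('a \<Rightarrow> ereal) \<Rightarrow> ('a \<Rightarrow> ereal)" where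
  "Top lam l u x = (INF y. (u y + ereal (l x * dist x y)) / ereal (1 + lam * dist x y))"

definition Top_inf :: "real \<Rightarrow> ('a::metric_space \<Rightarrow> real) \<Rightarrow> ('a \<Rightarrow> ereal) \<Rightarrow> ('a \<Rightarrow> ereal)" where
  "Top_inf lam l u x = lim (\<lambda>n. ((Top lam l) ^^ n) u x)"

end

theory Submission
  imports Defs
begin

lemma gs_eq:
  fixes u :: "'a::metric_space \<Rightarrow> real"
  shows "gslope (\<lambda>z. ereal (u z)) x = Sup (insert 0 {ereal (max 0 (u x - u y) / dist x y) | y. y \<noteq> x})"
proof -
  have "\<And>y. y \<noteq> x \<Longrightarrow> max 0 (ereal (u x) - ereal (u y)) / ereal (dist x y) = ereal (max 0 (u x - u y) / dist x y)"
    by (simp add: zero_ereal_def max_def)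
  then have "{max 0 (ereal (u x) - ereal (u y)) / ereal (dist x y) | y. y \<noteq> x} = {ereal (max 0 (u x - u y) / dist x y) | y. y \<noteq> x}"
    by metis
  then show ?thesis unfolding gslope_def by simp
qed

lemma gs_elem:
  fixes u :: "'a::metric_space \<Rightarrow> real"
  assumes "y \<noteq> x"
  shows "ereal (max 0 (u x - u y) / dist x y) \<le> gslope (\<lambda>z. ereal (u z)) x"
  unfolding gs_eq by (rule Sup_upper) (use assms in blast)

lemma gs_nonneg: "0 \<le> gslope (\<lambda>z. ereal (u z)) x"
  unfolding gs_eq by (rule Sup_upper) blast

lemma gs_le:
  fixes u :: "'a::metric_space \<Rightarrow> real"
  assumes "0 \<le> r" "\<And>y. y \<noteq> x \<Longrightarrow> max 0 (u x - u y) / dist x y \<le> r"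
  shows "gslope (\<lambda>z. ereal (u z)) x \<le> ereal r"
  unfolding gs_eq by (rule Sup_least) (use assms in auto)

lemma lsc_ereal:
  fixes f :: "'a::topological_space \<Rightarrow> real"
  assumes "\<And>c. open {x. c < f x}"
  shows "lsc (\<lambda>x. ereal (f x))"
  unfolding lsc_def
proof
  fix c :: ereal
  show "open {x. c < ereal (f x)}"
  proof (cases c)
    case (real r) then show ?thesis using assms[of r] by simp
  qed auto
qed

lemma ereal_inf0:
  fixes f :: "'a \<Rightarrow> real"
  assumes "\<And>x. f x \<ge> 0" "\<And>e. e > 0 \<Longrightarrow> \<exists>x. f x < e"
  shows "(INF x. ereal (f x)) = 0"
proof (rule antisym)
  show "0 \<le> (INF x. ereal (f x))" using assms(1) by (auto intro!: INF_greatest)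
  show "(INF x. ereal (f x)) \<le> 0"
  proof (rule ereal_le_epsilon2)
    fix e :: real assume "0 < e"
    then obtain x where "f x < e" using assms(2) by blast
    then have "(INF x. ereal (f x)) \<le> ereal e" by (meson INF_lower2 UNIV_I less_eq_ereal_def ereal_less_eq(3) less_imp_le)
    then show "(INF x. ereal (f x)) \<le> 0 + ereal e" by simp
  qed
qed

locale PS =
  fixes l :: "'a::metric_space \<Rightarrow> real" and lam :: real and D :: real
  assumes bnd: "bounded (UNIV :: 'a set)" and lam0: "lam \<ge> 0" and l0: "\<And>x. l x \<ge> 0"
    and lscl: "lsc l" and infl: "(INF x. l x) = 0" and D_def: "D = diameter (UNIV::'a set)"
begin

lemma dist_le_D: "dist (x::'a) y \<le> D"
  using diameter_bounded_bound[OF bnd] D_def by auto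

lemma D0: "D \<ge> 0"
  using dist_le_D[of undefined undefined] by simp

lemma l_small: "e > 0 \<Longrightarrow> \<exists>x. l x < e"
proof -
  assume "e > 0"
  have b: "bdd_below (range l)" using l0 by (auto intro: bdd_belowI[of _ 0])
  have "(INF x. l x) < e" using infl \<open>e > 0\<close> by simp
  then show ?thesis using cINF_less_iff[OF _ b] by auto
qed

lemma D_pos: "l x > 0 \<Longrightarrow> D > 0"
proof -
  assume "l x > 0"
  then obtain y where "l y < l x" using l_small by blast
  then have "y \<noteq> x" by auto
  then have "dist x y > 0" by simp
  then show ?thesis using dist_le_D[of x y] by linarith
qed

definition Tr :: "('a \<Rightarrow> real) \<Rightarrow> 'a \<Rightarrow> real" where
  "Tr f x = (INF y. (f y + l x * dist x y) / (1 + lam * dist x y))"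

lemma den_pos: "1 + lam * dist x y > 0"
  using lam0 by (simp add: add_pos_nonneg)

lemma term_nonneg: "f y \<ge> 0 \<Longrightarrow> (f y + l x * dist x y) / (1 + lam * dist x y) \<ge> 0"
  using den_pos[of x y] l0[of x] by simp

lemma Tr_bdd: "(\<And>z. f z \<ge> 0) \<Longrightarrow> bdd_below (range (\<lambda>y. (f y + l x * dist x y) / (1 + lam * dist x y)))"
  using term_nonneg by (auto intro: bdd_belowI[of _ 0])

lemma Tr_lower: "(\<And>z. f z \<ge> 0) \<Longrightarrow> Tr f x \<le> (f y + l x * dist x y) / (1 + lam * dist x y)"
  unfolding Tr_def by (rule cINF_lower[OF Tr_bdd]) auto

lemma Tr_greatest: "(\<And>y. c \<le> (f y + l x * dist x y) / (1 + lam * dist x y)) \<Longrightarrow> c \<le> Tr f x"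
  unfolding Tr_def by (rule cINF_greatest) auto

lemma Tr_nonneg: "(\<And>z. f z \<ge> 0) \<Longrightarrow> Tr f x \<ge> 0"
  by (rule Tr_greatest) (rule term_nonneg, auto)

lemma Tr_le_self: "(\<And>z. f z \<ge> 0) \<Longrightarrow> Tr f x \<le> f x"
  using Tr_lower[of f x x] by simp

lemma Tr_mono: "(\<And>z. f z \<ge> 0) \<Longrightarrow> (\<And>z. f z \<le> g z) \<Longrightarrow> Tr f x \<le> Tr g x"
proof (rule Tr_greatest)
  fix y assume f0: "\<And>z. f z \<ge> 0" and fg: "\<And>z. f z \<le> g z"
  have "Tr f x \<le> (f y + l x * dist x y) / (1 + lam * dist x y)" by (rule Tr_lower[OF f0])
  also have "\<dots> \<le> (g y + l x * dist x y) / (1 + lam * dist x y)"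
    using den_pos[of x y] fg[of y] by (simp add: divide_right_mono)
  finally show "Tr f x \<le> (g y + l x * dist x y) / (1 + lam * dist x y)" .
qed

lemma Top_eq: "(\<And>z. f z \<ge> 0) \<Longrightarrow> Top lam l (\<lambda>z. ereal (f z)) = (\<lambda>z. ereal (Tr f z))"
proof
  fix x assume f0: "\<And>z. f z \<ge> 0"
  let ?h = "\<lambda>y. (f y + l x * dist x y) / (1 + lam * dist x y)"
  have e: "\<And>y. (ereal (f y) + ereal (l x * dist x y)) / ereal (1 + lam * dist x y) = ereal (?h y)"
  proof -
    fix y
    have "1 + lam * dist x y \<noteq> 0" using den_pos[of x y] by linarith
    then show "(ereal (f y) + ereal (l x * dist x y)) / ereal (1 + lam * dist x y) = ereal (?h y)" by simp
  qed
  have "Top lam l (\<lambda>z. ereal (f z)) x = (INF y. ereal (?h y))"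
    unfolding Top_def e by simp
  also have "\<dots> = ereal (Inf (range ?h))"
    using ereal_Inf'[OF Tr_bdd[of f x, OF f0]] by (simp add: image_comp)
  finally show "Top lam l (\<lambda>z. ereal (f z)) x = ereal (Tr f x)" unfolding Tr_def by simp
qed

definition s :: "nat \<Rightarrow> 'a \<Rightarrow> real" where
  "s n = (Tr ^^ n) (\<lambda>z. l z * D)"

lemma s_nonneg: "s n z \<ge> 0"
proof (induction n arbitrary: z)
  case 0 then show ?case using l0 D0 by (simp add: s_def)
next
  case (Suc n) then show ?case unfolding s_def using Tr_nonneg by simp
qed

lemma s_Suc: "s (Suc n) = Tr (s n)"
  by (simp add: s_def)

lemma Top_iter: "(Top lam l ^^ n) (\<lambda>z. ereal (l z * D)) = (\<lambda>z. ereal (s n z))"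
proof (induction n)
  case 0 then show ?case by (simp add: s_def)
next
  case (Suc n) then show ?case using Top_eq[of "s n"] s_nonneg by (simp add: s_Suc)
qed

definition u :: "'a \<Rightarrow> real" where
  "u z = (INF n. s n z)"

lemma s_bdd: "bdd_below (range (\<lambda>n. s n z))"
  using s_nonneg by (auto intro: bdd_belowI[of _ 0])

lemma s_dec: "decseq (\<lambda>n. s n z)"
  by (rule decseq_SucI) (simp add: s_Suc Tr_le_self s_nonneg)

lemma Top_inf_eq: "Top_inf lam l (\<lambda>z. ereal (l z * D)) = (\<lambda>z. ereal (u z))"
proof
  fix z
  have "(\<lambda>n. s n z) \<longlonglongrightarrow> u z" unfolding u_def by (rule LIMSEQ_decseq_INF[OF s_bdd s_dec])
  then have "(\<lambda>n. ereal (s n z)) \<longlonglongrightarrow> ereal (u z)" by simp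
  then show "Top_inf lam l (\<lambda>z. ereal (l z * D)) z = ereal (u z)"
    unfolding Top_inf_def Top_iter by (rule limI)
qed

lemma u_nonneg: "u z \<ge> 0"
  unfolding u_def by (rule cINF_greatest) (auto simp: s_nonneg)

lemma u_le_s: "u z \<le> s n z"
  unfolding u_def by (rule cINF_lower[OF s_bdd]) auto

lemma u_le_v: "u z \<le> l z * D"
  using u_le_s[of z 0] by (simp add: s_def)

definition sub :: "('a \<Rightarrow> real) \<Rightarrow> bool" where
  "sub f \<longleftrightarrow> (\<forall>x y. f x * (1 + lam * dist x y) \<le> f y + l x * dist x y)"

lemma sub_u: "sub u"
  unfolding sub_def
proof (intro allI)
  fix x y
  have "u x * (1 + lam * dist x y) - l x * dist x y \<le> u y"
    unfolding u_def[of y]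
  proof (rule cINF_greatest, simp)
    fix n
    have "u x \<le> Tr (s n) x" using u_le_s[of x "Suc n"] by (simp add: s_Suc)
    also have "\<dots> \<le> (s n y + l x * dist x y) / (1 + lam * dist x y)" by (rule Tr_lower[OF s_nonneg])
    finally have "u x * (1 + lam * dist x y) \<le> s n y + l x * dist x y"
      using den_pos[of x y] by (simp add: pos_le_divide_eq)
    then show "u x * (1 + lam * dist x y) - l x * dist x y \<le> s n y" by simp
  qed
  then show "u x * (1 + lam * dist x y) \<le> u y + l x * dist x y" by simp
qed

lemma u_small: "e > 0 \<Longrightarrow> \<exists>z. u z < e"
proof -
  assume e: "e > 0"
  show ?thesis
  proof (cases "D = 0")
    case True then show ?thesis using u_le_v e by (metis mult_zero_right le_less_trans)
  next
    case False
    then have "D > 0" using D0 by simp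
    then obtain z where "l z < e / D" using l_small[of "e / D"] e by auto
    then have "l z * D < e" using \<open>D > 0\<close> by (simp add: pos_less_divide_eq)
    then show ?thesis using u_le_v by (meson le_less_trans)
  qed
qed

lemma u_max:
  assumes w0: "\<And>z. w z \<ge> 0" and sw: "sub w" and wv: "\<And>z. w z \<le> l z * D"
  shows "w z \<le> u z"
proof -
  have "w z \<le> s n z" for n
  proof (induction n arbitrary: z)
    case 0 then show ?case using wv by (simp add: s_def)
  next
    case (Suc n)
    have "w z \<le> Tr w z"
    proof (rule Tr_greatest)
      fix y
      show "w z \<le> (w y + l z * dist z y) / (1 + lam * dist z y)"
        using sw den_pos[of z y] unfolding sub_def by (simp add: pos_le_divide_eq)
    qed
    also have "\<dots> \<le> Tr (s n) z" by (rule Tr_mono[OF w0 Suc.IH])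
    finally show ?case by (simp add: s_Suc)
  qed
  then show ?thesis unfolding u_def by (intro cINF_greatest) auto
qed

end

context PS
begin

lemma bump:
  fixes U :: "'a \<Rightarrow> real" and x :: 'a
  assumes U0: "\<And>z. U z \<ge> 0" and subU: "sub U" and Usm: "\<And>e. e > 0 \<Longrightarrow> \<exists>z. U z < e"
    and Umax: "\<And>w. (\<And>z. w z \<ge> 0) \<Longrightarrow> sub w \<Longrightarrow> (\<And>z. w z \<le> l z * D) \<Longrightarrow> (\<And>z. w z \<le> U z)"
    and Uv: "\<And>z. U z \<le> l z * D"
    and g0: "0 \<le> g" and gl: "g < l x - lam * U x"
    and gy: "\<And>y. y \<noteq> x \<Longrightarrow> U x - U y \<le> g * dist x y"
  shows False
proof -
  define a where "a = l x - lam * U x - g"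
  have a0: "a > 0" using gl a_def by simp
  have lamU: "lam * U x \<ge> 0" using lam0 U0 by simp
  have lx: "l x \<ge> g + a" using a_def lamU by simp
  have Dp: "D > 0" using D_pos[of x] lx g0 a0 by simp
  have UxD: "U x \<le> g * D"
  proof (rule ccontr)
    assume "\<not> U x \<le> g * D"
    then have e: "U x - g * D > 0" by simp
    then obtain z where z: "U z < U x - g * D" using Usm by blast
    have "g * D \<ge> 0" using g0 Dp by simp
    then have "z \<noteq> x" using z by auto
    then have "U x - U z \<le> g * dist x z" by (rule gy)
    also have "\<dots> \<le> g * D" using g0 dist_le_D[of x z] by (simp add: mult_left_mono)
    finally show False using z by simp
  qed
  have "open {z. l x - a/4 < l z}" using lscl unfolding lsc_def by simp
  moreover have "x \<in> {z. l x - a/4 < l z}" using a0 by simp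
  ultimately obtain r where r0: "r > 0" and rb: "\<And>z. dist z x < r \<Longrightarrow> l x - a/4 < l z"
    unfolding open_dist by blast
  define k where "k = g + a/2"
  define \<delta> where "\<delta> = min (a / (4 * (lam + 1))) (min (3 * a * D / 4) (a * r / 2))"
  have d0: "\<delta> > 0" unfolding \<delta>_def using a0 Dp r0 lam0 by simp
  have d1: "lam * \<delta> \<le> a / 4"
  proof -
    have "\<delta> \<le> a / (4 * (lam + 1))" unfolding \<delta>_def by simp
    then have "\<delta> * (4 * (lam + 1)) \<le> a" using lam0 by (simp add: le_divide_eq)
    then show ?thesis using d0 by (simp add: algebra_simps)
  qed
  have d23: "\<delta> \<le> min (3 * a * D / 4) (a * r / 2)" unfolding \<delta>_def by (rule min.cobounded2)
  have d2: "\<delta> \<le> 3 * a * D / 4" using d23 by simp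
  have d3: "\<delta> \<le> a * r / 2" using d23 by simp
  define \<phi> where "\<phi> z = U x + \<delta> - k * dist x z" for z
  define w where "w z = max (U z) (\<phi> z)" for z
  have far: "\<phi> z \<le> U z" if "dist x z \<ge> r" for z
  proof -
    have "z \<noteq> x" using that r0 by auto
    then have "U x - U z \<le> g * dist x z" by (rule gy)
    moreover have "a / 2 * r \<le> a / 2 * dist x z" using that a0 by (intro mult_left_mono) auto
    ultimately show ?thesis unfolding \<phi>_def k_def using d3 by (simp add: algebra_simps)
  qed
  have near: "l x - a/4 < l z" if "\<phi> z > U z" for z
  proof -
    have "dist x z < r" using far[of z] that by force
    then show ?thesis using rb by (simp add: dist_commute)
  qed
  have phi_le: "\<phi> z \<le> U x + \<delta>" for z
    unfolding \<phi>_def k_def using g0 a0 by simp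
  have w0: "w z \<ge> 0" for z unfolding w_def using U0[of z] by simp
  have wv: "w z \<le> l z * D" for z
  proof (cases "\<phi> z > U z")
    case True
    have "\<phi> z \<le> g * D + 3 * a * D / 4" using phi_le[of z] UxD d2 by simp
    also have "\<dots> = (g + 3 * a / 4) * D" by (simp add: algebra_simps)
    also have "\<dots> \<le> l z * D" using near[OF True] lx Dp by (intro mult_right_mono) auto
    finally show ?thesis unfolding w_def using Uv[of z] by simp
  next
    case False then show ?thesis unfolding w_def using Uv[of z] by simp
  qed
  have sw: "sub w"
    unfolding sub_def
  proof (intro allI)
    fix z y
    show "w z * (1 + lam * dist z y) \<le> w y + l z * dist z y"
    proof (cases "\<phi> z > U z")
      case False
      then have "w z = U z" unfolding w_def by simp
      moreover have "U z * (1 + lam * dist z y) \<le> U y + l z * dist z y" using subU unfolding sub_def by blast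
      moreover have "U y \<le> w y" unfolding w_def by simp
      ultimately show ?thesis by simp
    next
      case True
      then have wz: "w z = \<phi> z" unfolding w_def by simp
      have lz: "l x - a/4 < l z" by (rule near[OF True])
      have k0: "k \<ge> 0" unfolding k_def using a0 g0 by simp
      have "k * dist x y \<le> k * (dist x z + dist z y)"
        using dist_triangle[of x y z] k0 by (intro mult_left_mono) auto
      then have "\<phi> y \<ge> \<phi> z - k * dist z y"
        unfolding \<phi>_def by (simp add: algebra_simps)
      then have wy: "w y \<ge> \<phi> z - k * dist z y" unfolding w_def by simp
      have "lam * \<phi> z \<le> lam * (U x + \<delta>)" using phi_le[of z] lam0 by (simp add: mult_left_mono)
      then have "lam * \<phi> z \<le> lam * U x + a / 4" using d1 by (simp add: algebra_simps)
      then have key: "lam * \<phi> z + k \<le> l z" using lz a_def k_def by linarith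
      have "\<phi> z * (1 + lam * dist z y) = \<phi> z + (lam * \<phi> z) * dist z y" by (simp add: algebra_simps)
      also have "\<dots> \<le> \<phi> z + (l z - k) * dist z y" using key by (simp add: mult_right_mono)
      also have "\<dots> = (\<phi> z - k * dist z y) + l z * dist z y" by (simp add: algebra_simps)
      also have "\<dots> \<le> w y + l z * dist z y" using wy by simp
      finally show ?thesis using wz by simp
    qed
  qed
  have "w x \<le> U x" by (rule Umax[OF w0 sw wv])
  moreover have "w x \<ge> U x + \<delta>" unfolding w_def \<phi>_def by simp
  ultimately show False using d0 by simp
qed

end

context PS
begin

lemma sub_lower: "sub f \<Longrightarrow> (\<And>z. f z \<ge> 0) \<Longrightarrow> f x - l x * dist x y \<le> f y"
proof -
  assume sf: "sub f" and f0: "\<And>z. f z \<ge> 0"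
  have "f x * (1 + lam * dist x y) \<le> f y + l x * dist x y" using sf unfolding sub_def by blast
  moreover have "f x * (lam * dist x y) \<ge> 0" using f0[of x] lam0 by simp
  ultimately show ?thesis by (simp add: algebra_simps)
qed

lemma lsc_u: "lsc (\<lambda>z. ereal (u z))"
proof (rule lsc_ereal)
  fix c
  show "open {z. c < u z}"
    unfolding open_dist
  proof (intro ballI)
    fix x assume "x \<in> {z. c < u z}"
    then have cx: "c < u x" by simp
    define r where "r = (u x - c) / (l x + 1)"
    have lp: "l x + 1 > 0" using l0[of x] by simp
    have r0: "r > 0" unfolding r_def using cx lp by simp
    have "c < u y" if "dist y x < r" for y
    proof -
      have "l x * dist x y \<le> (l x + 1) * dist x y" by (simp add: algebra_simps)
      also have "\<dots> < (l x + 1) * r" using that lp by (simp add: dist_commute)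
      also have "\<dots> = u x - c" unfolding r_def using lp by simp
      finally show ?thesis using sub_lower[OF sub_u u_nonneg, of x y] by simp
    qed
    then show "\<exists>e>0. \<forall>y. dist y x < e \<longrightarrow> y \<in> {z. c < u z}" using r0 by blast
  qed
qed

lemma lamU_le: "lam * u x \<le> l x"
proof (cases "u x = 0")
  case True then show ?thesis using l0 by simp
next
  case False
  then have ux: "u x > 0" using u_nonneg[of x] by simp
  then obtain y where y: "u y < u x" using u_small by blast
  then have "y \<noteq> x" by auto
  then have dp: "dist x y > 0" by simp
  have "u x * (1 + lam * dist x y) \<le> u y + l x * dist x y" using sub_u unfolding sub_def by blast
  then have "(lam * u x) * dist x y < l x * dist x y" using y by (simp add: algebra_simps)
  then show ?thesis using dp by (simp add: mult_less_cancel_right) 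
qed

lemma eq_u: "ereal lam * ereal (u x) + gslope (\<lambda>z. ereal (u z)) x = ereal (l x)"
proof (rule antisym)
  have h: "l x - lam * u x \<ge> 0" using lamU_le by simp
  have "gslope (\<lambda>z. ereal (u z)) x \<le> ereal (l x - lam * u x)"
  proof (rule gs_le[OF h])
    fix y assume "y \<noteq> x"
    then have dp: "dist x y > 0" by simp
    have "u x * (1 + lam * dist x y) \<le> u y + l x * dist x y" using sub_u unfolding sub_def by blast
    then have "u x - u y \<le> (l x - lam * u x) * dist x y" by (simp add: algebra_simps)
    moreover have "0 \<le> (l x - lam * u x) * dist x y" using h by simp
    ultimately have "max 0 (u x - u y) \<le> (l x - lam * u x) * dist x y" by simp
    then show "max 0 (u x - u y) / dist x y \<le> l x - lam * u x" using dp by (simp add: divide_le_eq)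
  qed
  then have "ereal (lam * u x) + gslope (\<lambda>z. ereal (u z)) x \<le> ereal (lam * u x) + ereal (l x - lam * u x)"
    by (rule add_left_mono)
  then show "ereal lam * ereal (u x) + gslope (\<lambda>z. ereal (u z)) x \<le> ereal (l x)" by simp
next
  show "ereal (l x) \<le> ereal lam * ereal (u x) + gslope (\<lambda>z. ereal (u z)) x"
  proof (rule ccontr)
    assume "\<not> ?thesis"
    then have lt: "ereal (lam * u x) + gslope (\<lambda>z. ereal (u z)) x < ereal (l x)" by simp
    have gn: "0 \<le> gslope (\<lambda>z. ereal (u z)) x" by (rule gs_nonneg)
    have "gslope (\<lambda>z. ereal (u z)) x \<noteq> \<infinity>" using lt by auto
    then obtain g where g: "gslope (\<lambda>z. ereal (u z)) x = ereal g" using gn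
      by (cases "gslope (\<lambda>z. ereal (u z)) x") auto
    have g0: "0 \<le> g" using gn g by simp
    have gl: "g < l x - lam * u x" using lt g by simp
    have gy: "u x - u y \<le> g * dist x y" if "y \<noteq> x" for y
    proof -
      have dp: "dist x y > 0" using that by simp
      have "ereal (max 0 (u x - u y) / dist x y) \<le> ereal g" using gs_elem[OF that, of u] g by simp
      then have "max 0 (u x - u y) / dist x y \<le> g" by simp
      then have "max 0 (u x - u y) \<le> g * dist x y" using dp by (simp add: divide_le_eq)
      then show ?thesis by simp
    qed
    show False
      apply (rule bump[where U=u and g=g and x=x])
      using u_nonneg sub_u u_small u_le_v g0 gl gy by (auto intro: u_max)
  qed
qed

lemma sol_u: "sol lam l (\<lambda>z. ereal (u z))"
  unfolding sol_def using lsc_u eq_u ereal_inf0[of u, OF u_nonneg u_small] by simp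

lemma v_small: "e > 0 \<Longrightarrow> \<exists>z. l z * D < e"
proof -
  assume e: "e > 0"
  show ?thesis
  proof (cases "D = 0")
    case True then show ?thesis using e by simp
  next
    case False
    then have "D > 0" using D0 by simp
    then obtain z where "l z < e / D" using l_small[of "e / D"] e by auto
    then have "l z * D < e" using \<open>D > 0\<close> by (simp add: pos_less_divide_eq)
    then show ?thesis by blast
  qed
qed

lemma supersol_v: "supersol lam l (\<lambda>z. ereal (l z * D))"
  unfolding supersol_def
proof (intro conjI allI)
  show "lsc (\<lambda>z. ereal (l z * D))"
  proof (rule lsc_ereal)
    fix c
    show "open {z. c < l z * D}"
    proof (cases "D = 0")
      case True then show ?thesis by (cases "c < 0") auto
    next
      case False
      then have Dp: "D > 0" using D0 by simp
      then have "{z. c < l z * D} = {z. c / D < l z}" by (auto simp: divide_less_eq)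
      then show ?thesis using lscl unfolding lsc_def by simp
    qed
  qed
  show "(INF z. ereal (l z * D)) = 0"
    by (rule ereal_inf0) (use l0 D0 v_small in auto)
  fix x
  have lhs0: "0 \<le> ereal (lam * (l x * D))" using lam0 l0[of x] D0 by simp
  show "ereal (l x) \<le> ereal lam * ereal (l x * D) + gslope (\<lambda>z. ereal (l z * D)) x"
  proof (cases "l x = 0")
    case True
    have "0 + 0 \<le> ereal (lam * (l x * D)) + gslope (\<lambda>z. ereal (l z * D)) x"
      by (rule add_mono[OF lhs0 gs_nonneg])
    then show ?thesis using True by (simp add: zero_ereal_def)
  next
    case False
    then have lxp: "l x > 0" using l0[of x] by simp
    then have Dp: "D > 0" by (rule D_pos)
    have "ereal (l x) \<le> gslope (\<lambda>z. ereal (l z * D)) x"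
    proof (rule ereal_le_epsilon2)
      fix e :: real assume e: "0 < e"
      obtain y where y: "l y < min e (l x)" using l_small[of "min e (l x)"] e lxp by auto
      then have "y \<noteq> x" by auto
      then have dp: "dist x y > 0" by simp
      have dD: "dist x y \<le> D" by (rule dist_le_D)
      have pos: "l x - l y > 0" using y by simp
      have "(l x - l y) * dist x y \<le> (l x - l y) * D" using pos dD by (simp add: mult_left_mono)
      then have "l x - l y \<le> (l x * D - l y * D) / dist x y" using dp by (simp add: le_divide_eq algebra_simps)
      also have "\<dots> \<le> max 0 (l x * D - l y * D) / dist x y" using dp by (simp add: divide_right_mono)
      finally have "ereal (l x - l y) \<le> gslope (\<lambda>z. ereal (l z * D)) x"
        using gs_elem[OF \<open>y \<noteq> x\<close>, of "\<lambda>z. l z * D"] by (meson ereal_less_eq(3) order_trans)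
      then have "ereal (l x) \<le> gslope (\<lambda>z. ereal (l z * D)) x + ereal (l y)"
        by (cases "gslope (\<lambda>z. ereal (l z * D)) x") auto
      also have "\<dots> \<le> gslope (\<lambda>z. ereal (l z * D)) x + ereal e" using y by (intro add_left_mono) simp
      finally show "ereal (l x) \<le> gslope (\<lambda>z. ereal (l z * D)) x + ereal e" .
    qed
    then show ?thesis using lhs0 by (simp add: add_increasing)
  qed
qed

lemma sol_le_u:
  assumes "sol lam l w"
  shows "w x \<le> ereal (u x)"
proof -
  have lw: "lsc w" and iw: "(INF z. w z) = 0" and ew: "\<And>z. ereal lam * w z + gslope w z = ereal (l z)"
    using assms unfolding sol_def by auto
  have w0: "0 \<le> w z" for z using iw by (metis INF_lower UNIV_I)
  have wfin: "w z \<noteq> \<infinity>" for z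
  proof
    assume wi: "w z = \<infinity>"
    then have "gslope w z = \<infinity>" unfolding gslope_def by simp
    moreover have "ereal lam * w z \<noteq> - \<infinity>" using wi lam0 by (cases "lam = 0") auto
    ultimately have "ereal lam * w z + gslope w z = \<infinity>" by simp
    then show False using ew[of z] by simp
  qed
  define wr where "wr z = real_of_ereal (w z)" for z
  have wwr: "w = (\<lambda>z. ereal (wr z))"
  proof
    fix z show "w z = ereal (wr z)" unfolding wr_def using w0[of z] wfin[of z]
      by (cases "w z") auto
  qed
  have wr0: "wr z \<ge> 0" for z using w0[of z] wwr by simp
  have ewr: "ereal (lam * wr z) + gslope (\<lambda>z. ereal (wr z)) z = ereal (l z)" for z
    using ew[of z] unfolding wwr by simp
  have swr: "sub wr"
    unfolding sub_def
  proof (intro allI)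
    fix x y
    show "wr x * (1 + lam * dist x y) \<le> wr y + l x * dist x y"
    proof (cases "y = x")
      case True then show ?thesis by simp
    next
      case False
      then have dp: "dist x y > 0" by simp
      have "ereal (lam * wr x) + ereal (max 0 (wr x - wr y) / dist x y) \<le> ereal (lam * wr x) + gslope (\<lambda>z. ereal (wr z)) x"
        by (rule add_left_mono[OF gs_elem[OF False]])
      then have "ereal (lam * wr x) + ereal (max 0 (wr x - wr y) / dist x y) \<le> ereal (l x)"
        using ewr[of x] by simp
      then have "lam * wr x + max 0 (wr x - wr y) / dist x y \<le> l x" by simp
      moreover have "(wr x - wr y) / dist x y \<le> max 0 (wr x - wr y) / dist x y"
        using dp by (intro divide_right_mono) auto
      ultimately have "(wr x - wr y) / dist x y \<le> l x - lam * wr x" by linarith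
      then have "wr x - wr y \<le> (l x - lam * wr x) * dist x y" using dp by (simp add: divide_le_eq)
      then show ?thesis by (simp add: algebra_simps)
    qed
  qed
  have wrv: "wr z \<le> l z * D" for z
  proof (rule field_le_epsilon)
    fix e :: real assume e: "0 < e"
    have "(INF z. ereal (wr z)) < ereal e" using iw wwr e by simp
    then obtain y where y: "ereal (wr y) < ereal e" by (meson INF_less_iff)
    have "wr z - l z * dist z y \<le> wr y" by (rule sub_lower[OF swr wr0])
    moreover have "l z * dist z y \<le> l z * D" using l0[of z] dist_le_D[of z y] by (simp add: mult_left_mono)
    ultimately show "wr z \<le> l z * D + e" using y by simp
  qed
  have "wr x \<le> u x" by (rule u_max[OF wr0 swr wrv])
  then show ?thesis using wwr by simp
qed

end

theorem proposition5p2: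
  fixes l :: "'a::metric_space \<Rightarrow> real" and lam :: real
  assumes "bounded (UNIV :: 'a set)"
    and "lam \<ge> 0"
    and "\<And>x. l x \<ge> 0"
    and "lsc l"
    and "(INF x. l x) = 0"
  shows "supersol lam l (\<lambda>x. ereal (l x * diameter (UNIV :: 'a set)))
    \<and> perron_sol lam l (Top_inf lam l (\<lambda>x. ereal (l x * diameter (UNIV :: 'a set))))"
proof -
  interpret P: PS l lam "diameter (UNIV :: 'a set)"
    using assms by unfold_locales auto
  show ?thesis
    unfolding P.Top_inf_eq perron_sol_def using P.supersol_v P.sol_u P.sol_le_u by blast
qed

end
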